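(* Under the hypotheses: $N\ge M$, $d_i>0$ for all $i$, $\mathbf{P}\in\mathbb{Z}_{\ge0}^N$ with $P_N>0$, $\mathbf{L}\in\mathbb{R}^{N\times M}$ full rank with non-negative entries and $L_{N,j}>0$ for all $j$, let $\boldsymbol\alpha^{(0)}\in\mathbb{R}^M$ have all components strictly positive and define $\boldsymbol\alpha^{(n+1)}=\mathbf{T}(\boldsymbol\alpha^{(n)})$. If the sequence $(\boldsymbol\alpha^{(n)})$ converges, then its limit satisfies both KKT conditions ($\tilde\alpha_j\partial_jl(\tilde{\boldsymbol\alpha})=0$ for all $j$, and $\partial_jl(\tilde{\boldsymbol\alpha})\le0$ whenever $\tilde\alpha_j=0$) and is therefore the unique maximizer of $l$ on the non-negative orthant.
   Context: $l(\boldsymbol\alpha)=\sum_{i=1}^N\big(P_i\log d_i-(\mathbf{L}\boldsymbol\alpha)_iP_i-d_i e^{-(\mathbf{L}\boldsymbol\alpha)_i}-\log(P_i!)\big)$ for $\boldsymbol\alpha\ge0$, with $\partial_j l(\boldsymbol\alpha)=\sum_i L_{i,j}\big(d_ie^{-(\mathbf{L}\boldsymbol\alpha)_i}-P_i\big)$. The map $\mathbf{T}$ is $\mathbf{T}(\boldsymbol\alpha)_j=\dfrac{(\mathbf{L}^T(\mathbf{d}\odot e^{-\mathbf{L}\boldsymbol\alpha}))_j}{(\mathbf{L}^T\mathbf{P})_j}\alpha_j$, with $\odot$ the componentwise product and the exponential taken componentwise. *)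

theory Defs
  imports "HOL-Analysis.Analysis"
begin

text \<open>Rows are indexed by the finite type 'n (N = CARD('n)), columns by 'm (M = CARD('m)).
  L :: real^'m^'n is the N x M matrix, d :: real^'n, P :: 'n => nat (counts),
  alpha :: real^'m.\<close>

definition loglik :: "real^'m^'n \<Rightarrow> real^'n \<Rightarrow> ('n::finite \<Rightarrow> nat) \<Rightarrow> real^'m \<Rightarrow> real" where
  "loglik L d P \<alpha> = (\<Sum>i\<in>UNIV. real (P i) * ln (d$i) - (L *v \<alpha>)$i * real (P i)
       - d$i * exp (- (L *v \<alpha>)$i) - ln (fact (P i)))"

definition dloglik :: "real^'m^'n \<Rightarrow> real^'n \<Rightarrow> ('n::finite \<Rightarrow> nat) \<Rightarrow> real^'m \<Rightarrow> 'm \<Rightarrow> real" where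
  "dloglik L d P \<alpha> j = (\<Sum>i\<in>UNIV. L$i$j * (d$i * exp (- (L *v \<alpha>)$i) - real (P i)))"

definition Tmap :: "real^'m^'n \<Rightarrow> real^'n \<Rightarrow> ('n::finite \<Rightarrow> nat) \<Rightarrow> real^'m \<Rightarrow> real^'m" where
  "Tmap L d P \<alpha> = (\<chi> j. (\<Sum>i\<in>UNIV. L$i$j * (d$i * exp (- (L *v \<alpha>)$i)))
                         / (\<Sum>i\<in>UNIV. L$i$j * real (P i)) * \<alpha>$j)"

end

theory Submission
  imports Defs
begin

lemma exp_strict: "(x::real) \<noteq> 0 \<Longrightarrow> 1 + x < exp x"
proof (cases "1 + x/2 \<ge> 0")
  case True
  assume x: "x \<noteq> 0"
  have "1 + x/2 \<le> exp (x/2)" by (rule exp_ge_add_one_self)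
  hence "(1 + x/2)^2 \<le> (exp (x/2))^2" using True by (rule power_mono)
  also have "(exp (x/2))^2 = exp x" by (simp add: power2_eq_square flip: exp_add)
  finally have "(1 + x/2)^2 \<le> exp x" .
  moreover have "1 + x < (1 + x/2)^2"
  proof -
    have "x^2 > 0" using x by simp
    moreover have "(1+x/2)^2 = 1 + x + x^2/4" by (simp add: power2_eq_square field_simps)
    ultimately show ?thesis by linarith
  qed
  ultimately show ?thesis by linarith
next
  case False
  then show ?thesis using exp_gt_zero[of x] by linarith
qed

lemma exp_diff_le:
  fixes u v c :: real
  assumes c: "c > 0"
  shows "- c * (exp (-u) - exp (-v)) \<le> (u - v) * (c * exp (-v))"
    and "u \<noteq> v \<Longrightarrow> - c * (exp (-u) - exp (-v)) < (u - v) * (c * exp (-v))"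
proof -
  have e: "exp (-u) = exp (-v) * exp (-(u - v))" by (simp flip: exp_add)
  have h: "1 - (u-v) \<le> exp (-(u-v))" using exp_ge_add_one_self[of "-(u-v)"] by linarith
  have "exp (-v) * (1 - (u-v)) \<le> exp (-v) * exp (-(u-v))" by (rule mult_left_mono[OF h]) simp
  hence "exp (-v) * (1 - (u-v)) \<le> exp (-u)" using e by simp
  hence "c * (exp (-v) * (1 - (u-v))) \<le> c * exp (-u)" using c by (intro mult_left_mono) auto
  thus "- c * (exp (-u) - exp (-v)) \<le> (u - v) * (c * exp (-v))" by (simp add: algebra_simps)
  assume "u \<noteq> v"
  hence "1 + (-(u-v)) < exp (-(u-v))" by (intro exp_strict) auto
  hence h2: "1 - (u-v) < exp (-(u-v))" by linarith
  have "exp (-v) * (1 - (u-v)) < exp (-v) * exp (-(u-v))" by (rule mult_strict_left_mono[OF h2]) simp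
  hence "exp (-v) * (1 - (u-v)) < exp (-u)" using e by simp
  hence "c * (exp (-v) * (1 - (u-v))) < c * exp (-u)" using c by (intro mult_strict_left_mono) auto
  thus "- c * (exp (-u) - exp (-v)) < (u - v) * (c * exp (-v))" by (simp add: algebra_simps)
qed

theorem mainTheorem3:
  fixes L :: "real^'m::finite^'n::finite" and d :: "real^'n" and P :: "'n \<Rightarrow> nat"
    and r :: 'n and \<alpha>0 :: "real^'m" and \<alpha>lim :: "real^'m"
  assumes NM: "CARD('n) \<ge> CARD('m)"
    and dpos: "\<forall>i. d$i > 0"
    and Pr: "P r > 0"
    and rankL: "rank L = CARD('m)"
    and Lnn: "\<forall>i j. L$i$j \<ge> 0"
    and Lr: "\<forall>j. L$r$j > 0"
    and a0: "\<forall>j. \<alpha>0$j > 0"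
    and conv: "(\<lambda>n. (Tmap L d P ^^ n) \<alpha>0) \<longlonglongrightarrow> \<alpha>lim"
  shows "(\<forall>j. \<alpha>lim$j * dloglik L d P \<alpha>lim j = 0)
       \<and> (\<forall>j. \<alpha>lim$j = 0 \<longrightarrow> dloglik L d P \<alpha>lim j \<le> 0)
       \<and> (\<forall>j. \<alpha>lim$j \<ge> 0)
       \<and> (\<forall>\<beta>::real^'m. (\<forall>j. \<beta>$j \<ge> 0) \<longrightarrow> \<beta> \<noteq> \<alpha>lim \<longrightarrow> loglik L d P \<beta> < loglik L d P \<alpha>lim)"
proof -
  define a where "a n = (Tmap L d P ^^ n) \<alpha>0" for n
  define D where "D j = (\<Sum>i\<in>UNIV. L$i$j * real (P i))" for j
  define Num where "Num \<alpha> j = (\<Sum>i\<in>UNIV. L$i$j * (d$i * exp (- (L *v \<alpha>)$i)))" for \<alpha> j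
  define F where "F \<alpha> j = Num \<alpha> j / D j" for \<alpha> j
  have Tm: "Tmap L d P \<alpha> $ j = F \<alpha> j * \<alpha>$j" for \<alpha> j
    by (simp add: Tmap_def F_def Num_def D_def)
  have aS: "a (Suc n) = Tmap L d P (a n)" for n by (simp add: a_def)
  have Dpos: "D j > 0" for j
    unfolding D_def
    by (rule sum_pos2[of _ r]) (use Lr Pr Lnn in auto)
  have Numpos: "Num \<alpha> j > 0" for \<alpha> j
    unfolding Num_def
  proof (rule sum_pos2[of _ r])
    show "0 < L $ r $ j * (d $ r * exp (- (L *v \<alpha>) $ r))" using Lr dpos by simp
    show "0 \<le> L $ i $ j * (d $ i * exp (- (L *v \<alpha>) $ i))" for i
      using Lnn dpos by (simp add: less_imp_le)
  qed simp_all
  have Fpos: "F \<alpha> j > 0" for \<alpha> j using Dpos Numpos by (simp add: F_def)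
  have dl: "dloglik L d P \<alpha> j = Num \<alpha> j - D j" for \<alpha> j
    by (simp add: dloglik_def Num_def D_def right_diff_distrib sum_subtractf)
  have apos: "a n $ j > 0" for n j
    by (induction n) (auto simp: a_def[of 0] aS Tm a0 Fpos)
  have conv': "a \<longlonglongrightarrow> \<alpha>lim" using conv by (simp add: a_def[abs_def])
  have comp: "(\<lambda>n. a n $ j) \<longlonglongrightarrow> \<alpha>lim $ j" for j
    by (rule tendsto_vec_nth[OF conv'])
  have Lv: "(\<lambda>n. (L *v a n) $ i) \<longlonglongrightarrow> (L *v \<alpha>lim) $ i" for i
    unfolding matrix_vector_mult_def vec_lambda_beta
    by (intro tendsto_intros comp)
  have Fconv: "(\<lambda>n. F (a n) j) \<longlonglongrightarrow> F \<alpha>lim j" for j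
    unfolding F_def Num_def
    by (intro tendsto_divide tendsto_const tendsto_sum tendsto_mult_left tendsto_exp tendsto_minus Lv)
      (use Dpos[of j] in auto)
  have nonneg: "\<alpha>lim $ j \<ge> 0" for j
    by (rule LIMSEQ_le_const[OF comp]) (use apos in \<open>auto intro: less_imp_le\<close>)
  have fixp: "\<alpha>lim $ j = F \<alpha>lim j * \<alpha>lim $ j" for j
  proof -
    have "(\<lambda>n. a (Suc n) $ j) \<longlonglongrightarrow> F \<alpha>lim j * \<alpha>lim $ j"
      unfolding aS Tm by (intro tendsto_intros Fconv comp)
    moreover have "(\<lambda>n. a (Suc n) $ j) \<longlonglongrightarrow> \<alpha>lim $ j"
      using comp[of j] by (rule LIMSEQ_Suc)
    ultimately show ?thesis using LIMSEQ_unique by blast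
  qed
  have K1: "\<alpha>lim$j * dloglik L d P \<alpha>lim j = 0" for j
  proof -
    have "\<alpha>lim $ j * Num \<alpha>lim j = \<alpha>lim $ j * D j"
      using fixp[of j] Dpos[of j] by (simp add: F_def field_simps) metis
    thus ?thesis by (simp add: dl algebra_simps)
  qed
  have K2: "dloglik L d P \<alpha>lim j \<le> 0" if z: "\<alpha>lim$j = 0" for j
  proof (rule ccontr)
    assume "\<not> ?thesis"
    hence "Num \<alpha>lim j > D j" by (simp add: dl)
    hence "F \<alpha>lim j > 1" using Dpos[of j] by (simp add: F_def)
    hence "eventually (\<lambda>n. F (a n) j > 1) sequentially"
      using order_tendstoD(1)[OF Fconv[of j]] by blast
    then obtain N where N: "\<And>n. n \<ge> N \<Longrightarrow> F (a n) j > 1"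
      by (auto simp: eventually_sequentially)
    have "a n $ j \<ge> a N $ j" if "n \<ge> N" for n
      using that
    proof (induction n rule: dec_induct)
      case base then show ?case by simp
    next
      case (step n)
      have "a n $ j \<le> F (a n) j * a n $ j"
        using N[OF step(1)] apos[of n j] by simp
      then show ?case using step by (simp add: aS Tm)
    qed
    hence "\<alpha>lim $ j \<ge> a N $ j"
      by (intro LIMSEQ_le_const[OF comp]) auto
    thus False using apos[of N j] z by simp
  qed
  have inj: "inj ((*v) L)" using rankL by (simp add: full_rank_injective)
  have K4: "loglik L d P \<beta> < loglik L d P \<alpha>lim" if b: "\<forall>j. \<beta>$j \<ge> 0" and ne: "\<beta> \<noteq> \<alpha>lim" for \<beta>
  proof -
    define u where "u = L *v \<beta>"
    define v where "v = L *v \<alpha>lim"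
    define c where "c i = d$i * exp (- v$i) - real (P i)" for i
    have uv: "u \<noteq> v" using inj ne by (auto simp: u_def v_def inj_def)
    then obtain i0 where i0: "u$i0 \<noteq> v$i0" by (auto simp: vec_eq_iff)
    have diff: "loglik L d P \<beta> - loglik L d P \<alpha>lim
        = (\<Sum>i\<in>UNIV. - (u$i - v$i) * real (P i) - d$i * (exp (-u$i) - exp (-v$i)))"
    proof -
      have "loglik L d P \<beta> - loglik L d P \<alpha>lim = (\<Sum>i\<in>UNIV.
          (real (P i) * ln (d$i) - u$i * real (P i) - d$i * exp (-u$i) - ln (fact (P i)))
        - (real (P i) * ln (d$i) - v$i * real (P i) - d$i * exp (-v$i) - ln (fact (P i))))"
        unfolding loglik_def u_def v_def by (rule sum_subtractf[symmetric])
      also have "\<dots> = (\<Sum>i\<in>UNIV. - (u$i - v$i) * real (P i) - d$i * (exp (-u$i) - exp (-v$i)))"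
        by (rule sum.cong) (simp_all add: algebra_simps)
      finally show ?thesis .
    qed
    also have "\<dots> < (\<Sum>i\<in>UNIV. (u$i - v$i) * c i)"
    proof (rule sum_strict_mono_ex1)
      show "\<forall>i\<in>UNIV. - (u$i - v$i) * real (P i) - d$i * (exp (-u$i) - exp (-v$i)) \<le> (u$i - v$i) * c i"
      proof
        fix i :: 'n
        have e: "(u$i - v$i) * c i = (u$i - v$i) * (d$i * exp (- v$i)) - (u$i - v$i) * real (P i)"
          by (simp add: c_def right_diff_distrib)
        have b: "- d$i * (exp (-u$i) - exp (-v$i)) \<le> (u$i - v$i) * (d$i * exp (- v$i))"
          using dpos by (intro exp_diff_le(1)) auto
        have m: "- (u$i - v$i) * real (P i) = - ((u$i - v$i) * real (P i))"
          "- d$i * (exp (-u$i) - exp (-v$i)) = - (d$i * (exp (-u$i) - exp (-v$i)))" by (simp_all add: algebra_simps)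
        show "- (u$i - v$i) * real (P i) - d$i * (exp (-u$i) - exp (-v$i)) \<le> (u$i - v$i) * c i"
          using e b m by linarith
      qed
      have e: "(u$i0 - v$i0) * c i0 = (u$i0 - v$i0) * (d$i0 * exp (- v$i0)) - (u$i0 - v$i0) * real (P i0)"
        by (simp add: c_def right_diff_distrib)
      have b: "- d$i0 * (exp (-u$i0) - exp (-v$i0)) < (u$i0 - v$i0) * (d$i0 * exp (- v$i0))"
        using dpos i0 by (intro exp_diff_le(2)) auto
      have m: "- (u$i0 - v$i0) * real (P i0) = - ((u$i0 - v$i0) * real (P i0))"
          "- d$i0 * (exp (-u$i0) - exp (-v$i0)) = - (d$i0 * (exp (-u$i0) - exp (-v$i0)))" by (simp_all add: algebra_simps)
      have "- (u$i0 - v$i0) * real (P i0) - d$i0 * (exp (-u$i0) - exp (-v$i0)) < (u$i0 - v$i0) * c i0"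
        using e b m by linarith
      then show "\<exists>i\<in>UNIV. - (u$i - v$i) * real (P i) - d$i * (exp (-u$i) - exp (-v$i)) < (u$i - v$i) * c i"
        by blast
    qed simp
    also have "(\<Sum>i\<in>UNIV. (u$i - v$i) * c i) = (\<Sum>j\<in>UNIV. (\<beta>$j - \<alpha>lim$j) * dloglik L d P \<alpha>lim j)"
    proof -
      have uvi: "u$i - v$i = (\<Sum>j\<in>UNIV. L$i$j * (\<beta>$j - \<alpha>lim$j))" for i
        by (simp add: u_def v_def matrix_vector_mult_def sum_subtractf[symmetric] right_diff_distrib)
      have dlc: "dloglik L d P \<alpha>lim j = (\<Sum>i\<in>UNIV. L$i$j * c i)" for j
        by (simp add: dloglik_def c_def v_def)
      have "(\<Sum>i\<in>UNIV. (u$i - v$i) * c i) = (\<Sum>i\<in>UNIV. \<Sum>j\<in>UNIV. L$i$j * (\<beta>$j - \<alpha>lim$j) * c i)"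
        by (simp add: uvi sum_distrib_right)
      also have "\<dots> = (\<Sum>j\<in>UNIV. \<Sum>i\<in>UNIV. L$i$j * (\<beta>$j - \<alpha>lim$j) * c i)"
        by (rule sum.swap)
      also have "\<dots> = (\<Sum>j\<in>UNIV. (\<beta>$j - \<alpha>lim$j) * dloglik L d P \<alpha>lim j)"
        by (simp add: dlc sum_distrib_left mult_ac)
      finally show ?thesis .
    qed
    also have "\<dots> \<le> 0"
    proof (rule sum_nonpos)
      fix j
      show "(\<beta>$j - \<alpha>lim$j) * dloglik L d P \<alpha>lim j \<le> 0"
      proof (cases "\<alpha>lim$j = 0")
        case True
        then show ?thesis using K2[OF True] b by (simp add: mult_nonneg_nonpos)
      next
        case False
        then have "dloglik L d P \<alpha>lim j = 0" using K1[of j] by simp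
        then show ?thesis by simp
      qed
    qed
    finally show ?thesis by simp
  qed
  show ?thesis using K1 K2 nonneg K4 by blast
qed

end
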